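(* (i) For any $\Gamma\cup\{A\}\subseteq\mathcal{L}_\infty$, if $\Gamma\vdash_{\mathbf{GL}_h}A$ then $\Gamma^f\vdash_{\mathbf{GL}}A^f$. (ii) For any set $\Gamma\cup\{A\}$ of formulas of the ordinary unimodal language $\mathcal{L}_\Box$ and any witnesses $v$ for $\Gamma$ and $w$ for $A$, if $\Gamma\vdash_{\mathbf{GL}}A$ then $\Gamma(v)\vdash_{\mathbf{GL}_h}A(w)$.
   Context: The language $\mathcal{L}_\infty$ consists of modal formulas built from propositional atoms, $\bot,\top$, the connectives $\neg,\wedge,\vee,\rightarrow$ and unary modalities $\Box_n$ ($n\in\mathbb{N}$), with the restriction that $\Box_n A$ is a formula only if $n$ is strictly greater than the index of every box occurring in $A$. Axiom instances are only those that are $\mathcal{L}_\infty$-formulas. Axiom schemes (for all $n\ge0$): $\mathbf{H}$: $\Box_n A\rightarrow\Box_{n+1}A$; $\mathbf{K}_h$: $\Box_n(A\rightarrow B)\rightarrow(\Box_nA\rightarrow\Box_nB)$; $\mathbf{4}_h$: $\Box_nA\rightarrow\Box_{n+1}\Box_nA$; $\mathbf{L}_h$: $\Box_{n+1}(\Box_nA\rightarrow A)\rightarrow\Box_nA$. $\mathbf{GL}_h$ is the least set of $\mathcal{L}_\infty$-formulas containing all classical propositional tautologies and all instances of $\mathbf{H},\mathbf{K}_h,\mathbf{4}_h,\mathbf{L}_h$, closed under modus ponens and the rule: from $A$ infer $\Box_nA$ for any $n$ greater than all box indices in $A$. $\mathbf{GL}$ is the usual Gödel–Löb provability logic in $\mathcal{L}_\Box$,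 the usual modal language with one modality $\Box$. For a logic $L$ and a set $\Gamma$, $\Gamma\vdash_LA$ means $\bigwedge\Delta\rightarrow A\in L$ for some finite $\Delta\subseteq\Gamma$. The forgetful translation $f:\mathcal{L}_\infty\to\mathcal{L}_\Box$ fixes atoms, commutes with the connectives and sends every $\Box_n$ to $\Box$; $\Gamma^f=\{B^f:B\in\Gamma\}$. A witness for $A\in\mathcal{L}_\Box$ is an assignment of a natural number to each occurrence of $\Box$ in $A$ such that the number assigned to each occurrence is strictly greater than the numbers assigned to all box occurrences inside its scope. For a witness $w$ of $A$, $A(w)\in\mathcal{L}_\infty$ is obtained by replacing each occurrence of $\Box$ by $\Box_n$ with $n$ its assigned number. A witness $v$ for a set $\Gamma$ is a family assigning a witness $v_B$ to each $B\in\Gamma$, and $\Gamma(v)=\{B(v_B):B\in\Gamma\}$. *)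

theory Defs
  imports Main
begin

datatype 'a hfm = HAtom 'a | HBot | HTop | HNeg "'a hfm" | HAnd "'a hfm" "'a hfm"
  | HOr "'a hfm" "'a hfm" | HImp "'a hfm" "'a hfm" | HBox nat "'a hfm"

fun boxes :: "'a hfm \<Rightarrow> nat set" where
  "boxes (HAtom p) = {}"
| "boxes HBot = {}"
| "boxes HTop = {}"
| "boxes (HNeg A) = boxes A"
| "boxes (HAnd A B) = boxes A \<union> boxes B"
| "boxes (HOr A B) = boxes A \<union> boxes B"
| "boxes (HImp A B) = boxes A \<union> boxes B"
| "boxes (HBox n A) = insert n (boxes A)"

fun in_Linf :: "'a hfm \<Rightarrow> bool" where
  "in_Linf (HAtom p) = True"
| "in_Linf HBot = True"
| "in_Linf HTop = True"
| "in_Linf (HNeg A) = in_Linf A"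
| "in_Linf (HAnd A B) = (in_Linf A \<and> in_Linf B)"
| "in_Linf (HOr A B) = (in_Linf A \<and> in_Linf B)"
| "in_Linf (HImp A B) = (in_Linf A \<and> in_Linf B)"
| "in_Linf (HBox n A) = (in_Linf A \<and> (\<forall>m\<in>boxes A. m < n))"

fun heval :: "('a \<Rightarrow> bool) \<Rightarrow> (nat \<Rightarrow> 'a hfm \<Rightarrow> bool) \<Rightarrow> 'a hfm \<Rightarrow> bool" where
  "heval va vb (HAtom p) = va p"
| "heval va vb HBot = False"
| "heval va vb HTop = True"
| "heval va vb (HNeg A) = (\<not> heval va vb A)"
| "heval va vb (HAnd A B) = (heval va vb A \<and> heval va vb B)"
| "heval va vb (HOr A B) = (heval va vb A \<or> heval va vb B)"
| "heval va vb (HImp A B) = (heval va vb A \<longrightarrow> heval va vb B)"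
| "heval va vb (HBox n A) = vb n A"

definition htaut :: "'a hfm \<Rightarrow> bool" where
  "htaut A \<longleftrightarrow> (\<forall>va vb. heval va vb A)"

inductive_set GLh :: "'a hfm set" where
  taut: "\<lbrakk>htaut A; in_Linf A\<rbrakk> \<Longrightarrow> A \<in> GLh"
| H: "in_Linf (HImp (HBox n A) (HBox (Suc n) A)) \<Longrightarrow> HImp (HBox n A) (HBox (Suc n) A) \<in> GLh"
| K: "in_Linf (HImp (HBox n (HImp A B)) (HImp (HBox n A) (HBox n B))) \<Longrightarrow>
      HImp (HBox n (HImp A B)) (HImp (HBox n A) (HBox n B)) \<in> GLh"
| Four: "in_Linf (HImp (HBox n A) (HBox (Suc n) (HBox n A))) \<Longrightarrow>
      HImp (HBox n A) (HBox (Suc n) (HBox n A)) \<in> GLh"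
| L: "in_Linf (HImp (HBox (Suc n) (HImp (HBox n A) A)) (HBox n A)) \<Longrightarrow>
      HImp (HBox (Suc n) (HImp (HBox n A) A)) (HBox n A) \<in> GLh"
| MP: "\<lbrakk>A \<in> GLh; HImp A B \<in> GLh\<rbrakk> \<Longrightarrow> B \<in> GLh"
| Nec: "\<lbrakk>A \<in> GLh; \<forall>m\<in>boxes A. m < n\<rbrakk> \<Longrightarrow> HBox n A \<in> GLh"

fun hconj :: "'a hfm list \<Rightarrow> 'a hfm" where
  "hconj [] = HTop"
| "hconj (D # Ds) = HAnd D (hconj Ds)"

definition hderiv :: "'a hfm set \<Rightarrow> 'a hfm \<Rightarrow> bool" where
  "hderiv \<Gamma> A \<longleftrightarrow> (\<exists>Ds. set Ds \<subseteq> \<Gamma> \<and> HImp (hconj Ds) A \<in> GLh)"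

datatype 'a mfm = MAtom 'a | MBot | MTop | MNeg "'a mfm" | MAnd "'a mfm" "'a mfm"
  | MOr "'a mfm" "'a mfm" | MImp "'a mfm" "'a mfm" | MBox "'a mfm"

fun meval :: "('a \<Rightarrow> bool) \<Rightarrow> ('a mfm \<Rightarrow> bool) \<Rightarrow> 'a mfm \<Rightarrow> bool" where
  "meval va vb (MAtom p) = va p"
| "meval va vb MBot = False"
| "meval va vb MTop = True"
| "meval va vb (MNeg A) = (\<not> meval va vb A)"
| "meval va vb (MAnd A B) = (meval va vb A \<and> meval va vb B)"
| "meval va vb (MOr A B) = (meval va vb A \<or> meval va vb B)"
| "meval va vb (MImp A B) = (meval va vb A \<longrightarrow> meval va vb B)"
| "meval va vb (MBox A) = vb A"

definition mtaut :: "'a mfm \<Rightarrow> bool" where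
  "mtaut A \<longleftrightarrow> (\<forall>va vb. meval va vb A)"

inductive_set GL :: "'a mfm set" where
  taut: "mtaut A \<Longrightarrow> A \<in> GL"
| K: "MImp (MBox (MImp A B)) (MImp (MBox A) (MBox B)) \<in> GL"
| L: "MImp (MBox (MImp (MBox A) A)) (MBox A) \<in> GL"
| MP: "\<lbrakk>A \<in> GL; MImp A B \<in> GL\<rbrakk> \<Longrightarrow> B \<in> GL"
| Nec: "A \<in> GL \<Longrightarrow> MBox A \<in> GL"

fun mconj :: "'a mfm list \<Rightarrow> 'a mfm" where
  "mconj [] = MTop"
| "mconj (D # Ds) = MAnd D (mconj Ds)"

definition mderiv :: "'a mfm set \<Rightarrow> 'a mfm \<Rightarrow> bool" where
  "mderiv \<Gamma> A \<longleftrightarrow> (\<exists>Ds. set Ds \<subseteq> \<Gamma> \<and> MImp (mconj Ds) A \<in> GL)"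

fun forget :: "'a hfm \<Rightarrow> 'a mfm" where
  "forget (HAtom p) = MAtom p"
| "forget HBot = MBot"
| "forget HTop = MTop"
| "forget (HNeg A) = MNeg (forget A)"
| "forget (HAnd A B) = MAnd (forget A) (forget B)"
| "forget (HOr A B) = MOr (forget A) (forget B)"
| "forget (HImp A B) = MImp (forget A) (forget B)"
| "forget (HBox n A) = MBox (forget A)"

text \<open>An assignment of numbers to occurrences: positions in the syntax tree are
  paths (lists of child indices from the root); the box occurrence at path p gets
  the number w p. inst w A is A(w).\<close>
type_synonym assignment = "nat list \<Rightarrow> nat"

fun inst :: "assignment \<Rightarrow> 'a mfm \<Rightarrow> 'a hfm" where
  "inst w (MAtom p) = HAtom p"
| "inst w MBot = HBot"
| "inst w MTop = HTop"
| "inst w (MNeg A) = HNeg (inst (\<lambda>p. w (0 # p)) A)"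
| "inst w (MAnd A B) = HAnd (inst (\<lambda>p. w (0 # p)) A) (inst (\<lambda>p. w (1 # p)) B)"
| "inst w (MOr A B) = HOr (inst (\<lambda>p. w (0 # p)) A) (inst (\<lambda>p. w (1 # p)) B)"
| "inst w (MImp A B) = HImp (inst (\<lambda>p. w (0 # p)) A) (inst (\<lambda>p. w (1 # p)) B)"
| "inst w (MBox A) = HBox (w []) (inst (\<lambda>p. w (0 # p)) A)"

text \<open>w is a witness for A iff the number of each box occurrence exceeds the numbers of
  all box occurrences in its scope, i.e. iff A(w) is an L_inf formula.\<close>
definition is_witness :: "assignment \<Rightarrow> 'a mfm \<Rightarrow> bool" where
  "is_witness w A \<longleftrightarrow> in_Linf (inst w A)"

end

theory Submission
  imports Defs
begin

lemma mtaut_mp: "mtaut (MImp P Q) \<Longrightarrow> P \<in> GL \<Longrightarrow> Q \<in> GL"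
  using GL.MP GL.taut by blast

lemma m_chain: "MImp X Y \<in> GL \<Longrightarrow> MImp Y Z \<in> GL \<Longrightarrow> MImp X Z \<in> GL"
proof -
  assume a: "MImp X Y \<in> GL" "MImp Y Z \<in> GL"
  have "mtaut (MImp (MImp X Y) (MImp (MImp Y Z) (MImp X Z)))" by (simp add: mtaut_def)
  then show ?thesis using a by (meson GL.MP GL.taut)
qed

lemma m_mono: "MImp X Y \<in> GL \<Longrightarrow> MImp (MBox X) (MBox Y) \<in> GL"
  using GL.Nec GL.K GL.MP by blast

lemma m_four: "MImp (MBox A) (MBox (MBox A)) \<in> GL"
proof -
  define B where "B = MAnd (MBox A) A"
  have t1: "MImp B A \<in> GL" by (rule GL.taut) (simp add: mtaut_def B_def)
  have 1: "MImp (MBox B) (MBox A) \<in> GL" using m_mono[OF t1] .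
  have "mtaut (MImp (MImp (MBox B) (MBox A)) (MImp A (MImp (MBox B) B)))"
    by (simp add: mtaut_def B_def)
  then have 2: "MImp A (MImp (MBox B) B) \<in> GL" using 1 mtaut_mp by blast
  have 3: "MImp (MBox A) (MBox (MImp (MBox B) B)) \<in> GL" using m_mono[OF 2] .
  have 4: "MImp (MBox A) (MBox B) \<in> GL" using m_chain[OF 3 GL.L] .
  have t5: "MImp B (MBox A) \<in> GL" by (rule GL.taut) (simp add: mtaut_def B_def)
  show ?thesis using m_chain[OF 4 m_mono[OF t5]] .
qed

lemma heval_forget: "heval va (\<lambda>n B. vb (forget B)) A = meval va vb (forget A)"
  by (induction A) auto

lemma forget_GLh: "X \<in> GLh \<Longrightarrow> forget X \<in> GL"
proof (induction rule: GLh.induct)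
  case (taut A)
  then show ?case
    by (intro GL.taut) (simp add: mtaut_def htaut_def flip: heval_forget)
next
  case (H n A)
  then show ?case by (intro GL.taut) (simp add: mtaut_def)
next
  case (K n A B)
  then show ?case using GL.K by simp
next
  case (Four n A)
  then show ?case using m_four by simp
next
  case (L n A)
  then show ?case using GL.L by simp
next
  case (MP A B)
  then show ?case using GL.MP by simp
next
  case (Nec A n)
  then show ?case using GL.Nec by simp
qed

lemma forget_hconj: "forget (hconj Ds) = mconj (map forget Ds)"
  by (induction Ds) auto

lemma GLh_Linf: "X \<in> GLh \<Longrightarrow> in_Linf X"
  by (induction rule: GLh.induct) auto

lemma htaut_mp: "htaut (HImp P Q) \<Longrightarrow> in_Linf Q \<Longrightarrow> P \<in> GLh \<Longrightarrow> Q \<in> GLh"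
  using GLh.MP GLh.taut GLh_Linf by fastforce

lemma h_chain: "HImp X Y \<in> GLh \<Longrightarrow> HImp Y Z \<in> GLh \<Longrightarrow> HImp X Z \<in> GLh"
proof -
  assume a: "HImp X Y \<in> GLh" "HImp Y Z \<in> GLh"
  then have l: "in_Linf X" "in_Linf Y" "in_Linf Z" using GLh_Linf by fastforce+
  have "HImp (HImp X Y) (HImp (HImp Y Z) (HImp X Z)) \<in> GLh"
    by (rule GLh.taut) (use l in \<open>auto simp: htaut_def\<close>)
  then show ?thesis using a by (meson GLh.MP)
qed

lemma h_refl: "in_Linf X \<Longrightarrow> HImp X X \<in> GLh"
  by (rule GLh.taut) (auto simp: htaut_def)

lemma h_up: "in_Linf (HBox n A) \<Longrightarrow> n \<le> m \<Longrightarrow> HImp (HBox n A) (HBox m A) \<in> GLh"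
proof (induction m)
  case 0
  then show ?case using h_refl[of "HBox n A"] by simp
next
  case (Suc m)
  show ?case
  proof (cases "n = Suc m")
    case True
    then show ?thesis using h_refl[of "HBox n A"] Suc.prems(1) by simp
  next
    case False
    then have "n \<le> m" using Suc by simp
    then have a: "HImp (HBox n A) (HBox m A) \<in> GLh" using Suc by simp
    have "HImp (HBox m A) (HBox (Suc m) A) \<in> GLh"
      by (rule GLh.H) (use Suc \<open>n \<le> m\<close> in auto)
    then show ?thesis using h_chain a by blast
  qed
qed

lemma h_collapse:
  assumes "in_Linf (HBox j Y)"
  shows "HImp (HBox (Suc j) Y) (HBox j Y) \<in> GLh"
proof -
  have lY: "in_Linf Y" "\<forall>m\<in>boxes Y. m < j" using assms by auto
  have t: "HImp Y (HImp (HBox j Y) Y) \<in> GLh"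
    by (rule GLh.taut) (use lY in \<open>auto simp: htaut_def\<close>)
  have n: "HBox (Suc j) (HImp Y (HImp (HBox j Y) Y)) \<in> GLh"
    by (rule GLh.Nec[OF t]) (use lY in auto)
  have k: "HImp (HBox (Suc j) (HImp Y (HImp (HBox j Y) Y)))
     (HImp (HBox (Suc j) Y) (HBox (Suc j) (HImp (HBox j Y) Y))) \<in> GLh"
    by (rule GLh.K) (use lY in auto)
  have 1: "HImp (HBox (Suc j) Y) (HBox (Suc j) (HImp (HBox j Y) Y)) \<in> GLh"
    using GLh.MP[OF n k] .
  have 2: "HImp (HBox (Suc j) (HImp (HBox j Y) Y)) (HBox j Y) \<in> GLh"
    by (rule GLh.L) (use lY in auto)
  show ?thesis using h_chain[OF 1 2] .
qed

lemma h_down: "in_Linf (HBox n A) \<Longrightarrow> n \<le> m \<Longrightarrow> HImp (HBox m A) (HBox n A) \<in> GLh"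
proof (induction m)
  case 0
  then show ?case using h_refl[of "HBox n A"] by simp
next
  case (Suc m)
  show ?case
  proof (cases "n = Suc m")
    case True
    then show ?thesis using h_refl[of "HBox n A"] Suc.prems(1) by simp
  next
    case False
    then have "n \<le> m" using Suc by simp
    then have a: "HImp (HBox m A) (HBox n A) \<in> GLh" using Suc by simp
    have "HImp (HBox (Suc m) A) (HBox m A) \<in> GLh"
      by (rule h_collapse) (use Suc \<open>n \<le> m\<close> in auto)
    then show ?thesis using h_chain a by blast
  qed
qed

lemma h_box_cong:
  assumes x: "in_Linf (HBox n X)" and y: "in_Linf (HBox m Y)" and i: "HImp X Y \<in> GLh"
  shows "HImp (HBox n X) (HBox m Y) \<in> GLh"
proof -
  define k where "k = max n m"
  have nec: "HBox k (HImp X Y) \<in> GLh"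
    by (rule GLh.Nec[OF i]) (use x y in \<open>auto simp: k_def\<close>)
  have kk: "HImp (HBox k (HImp X Y)) (HImp (HBox k X) (HBox k Y)) \<in> GLh"
    by (rule GLh.K) (use x y in \<open>auto simp: k_def\<close>)
  have 2: "HImp (HBox k X) (HBox k Y) \<in> GLh" using GLh.MP[OF nec kk] .
  have 1: "HImp (HBox n X) (HBox k X) \<in> GLh" by (rule h_up[OF x]) (simp add: k_def)
  have 3: "HImp (HBox k Y) (HBox m Y) \<in> GLh" by (rule h_down[OF y]) (simp add: k_def)
  show ?thesis using h_chain[OF h_chain[OF 1 2] 3] .
qed

lemma h_taut2:
  assumes "HImp X1 Y1 \<in> GLh" "HImp Y1 X1 \<in> GLh"
    and "htaut (HImp (HImp X1 Y1) (HImp (HImp Y1 X1) R))" "in_Linf R"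
  shows "R \<in> GLh"
proof -
  have l: "in_Linf X1" "in_Linf Y1" using assms GLh_Linf by fastforce+
  have "HImp (HImp X1 Y1) (HImp (HImp Y1 X1) R) \<in> GLh"
    by (rule GLh.taut) (use assms l in auto)
  then show ?thesis using assms by (meson GLh.MP)
qed

lemma h_taut4:
  assumes "HImp X1 Y1 \<in> GLh" "HImp Y1 X1 \<in> GLh" "HImp X2 Y2 \<in> GLh" "HImp Y2 X2 \<in> GLh"
    and "htaut (HImp (HImp X1 Y1) (HImp (HImp Y1 X1) (HImp (HImp X2 Y2) (HImp (HImp Y2 X2) R))))"
    and "in_Linf R"
  shows "R \<in> GLh"
proof -
  have l: "in_Linf X1" "in_Linf Y1" "in_Linf X2" "in_Linf Y2" using assms GLh_Linf by fastforce+
  have "HImp (HImp X1 Y1) (HImp (HImp Y1 X1) (HImp (HImp X2 Y2) (HImp (HImp Y2 X2) R))) \<in> GLh"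
    by (rule GLh.taut) (use assms l in auto)
  then show ?thesis using assms by (meson GLh.MP)
qed

lemma h_equiv:
  "in_Linf X \<Longrightarrow> in_Linf Y \<Longrightarrow> forget X = forget Y \<Longrightarrow>
   HImp X Y \<in> GLh \<and> HImp Y X \<in> GLh"
proof (induction X arbitrary: Y)
  case (HAtom p)
  then show ?case by (cases Y) (auto intro: h_refl)
next
  case HBot
  then show ?case by (cases Y) (auto intro: h_refl)
next
  case HTop
  then show ?case by (cases Y) (auto intro: h_refl)
next
  case (HNeg X1)
  then obtain Y1 where Y: "Y = HNeg Y1" by (cases Y) auto
  with HNeg have i: "HImp X1 Y1 \<in> GLh" "HImp Y1 X1 \<in> GLh" by auto
  show ?case using HNeg Y
    by (auto intro!: h_taut2[OF i] simp: htaut_def)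
next
  case (HAnd X1 X2)
  then obtain Y1 Y2 where Y: "Y = HAnd Y1 Y2" by (cases Y) auto
  with HAnd have i: "HImp X1 Y1 \<in> GLh" "HImp Y1 X1 \<in> GLh"
    "HImp X2 Y2 \<in> GLh" "HImp Y2 X2 \<in> GLh" by auto
  show ?case using HAnd Y
    by (auto intro!: h_taut4[OF i] simp: htaut_def)
next
  case (HOr X1 X2)
  then obtain Y1 Y2 where Y: "Y = HOr Y1 Y2" by (cases Y) auto
  with HOr have i: "HImp X1 Y1 \<in> GLh" "HImp Y1 X1 \<in> GLh"
    "HImp X2 Y2 \<in> GLh" "HImp Y2 X2 \<in> GLh" by auto
  show ?case using HOr Y
    by (auto intro!: h_taut4[OF i] simp: htaut_def)
next
  case (HImp X1 X2)
  then obtain Y1 Y2 where Y: "Y = HImp Y1 Y2" by (cases Y) auto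
  with HImp have i: "HImp X1 Y1 \<in> GLh" "HImp Y1 X1 \<in> GLh"
    "HImp X2 Y2 \<in> GLh" "HImp Y2 X2 \<in> GLh" by auto
  show ?case using HImp Y
    by (auto intro!: h_taut4[OF i] simp: htaut_def)
next
  case (HBox n X1)
  then obtain m Y1 where Y: "Y = HBox m Y1" by (cases Y) auto
  with HBox have i: "HImp X1 Y1 \<in> GLh" "HImp Y1 X1 \<in> GLh" by auto
  show ?case using HBox Y h_box_cong i by blast
qed

fun mh :: "'a mfm \<Rightarrow> nat" where
  "mh (MAtom p) = 0"
| "mh MBot = 0"
| "mh MTop = 0"
| "mh (MNeg A) = mh A"
| "mh (MAnd A B) = max (mh A) (mh B)"
| "mh (MOr A B) = max (mh A) (mh B)"
| "mh (MImp A B) = max (mh A) (mh B)"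
| "mh (MBox A) = Suc (mh A)"

fun canon :: "'a mfm \<Rightarrow> 'a hfm" where
  "canon (MAtom p) = HAtom p"
| "canon MBot = HBot"
| "canon MTop = HTop"
| "canon (MNeg A) = HNeg (canon A)"
| "canon (MAnd A B) = HAnd (canon A) (canon B)"
| "canon (MOr A B) = HOr (canon A) (canon B)"
| "canon (MImp A B) = HImp (canon A) (canon B)"
| "canon (MBox A) = HBox (mh A) (canon A)"

lemma canon_props: "in_Linf (canon A) \<and> (\<forall>m\<in>boxes (canon A). m < mh A)"
  by (induction A) (auto simp: less_max_iff_disj)

lemma forget_canon: "forget (canon A) = A"
  by (induction A) auto

lemma forget_inst: "forget (inst w A) = A"
  by (induction A arbitrary: w) auto

lemma heval_canon: "heval va vb (canon A) = meval va (\<lambda>B. vb (mh B) (canon B)) A"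
  by (induction A) auto

lemma transfer: "X \<in> GLh \<Longrightarrow> in_Linf Y \<Longrightarrow> forget X = forget Y \<Longrightarrow> Y \<in> GLh"
  using h_equiv GLh_Linf GLh.MP by blast

lemma canon_GL: "A \<in> GL \<Longrightarrow> canon A \<in> GLh"
proof (induction rule: GL.induct)
  case (taut A)
  then show ?case
    by (intro GLh.taut) (auto simp: htaut_def mtaut_def heval_canon canon_props)
next
  case (K A B)
  define n where "n = Suc (max (mh A) (mh B))"
  have "HImp (HBox n (HImp (canon A) (canon B))) (HImp (HBox n (canon A)) (HBox n (canon B))) \<in> GLh"
    by (rule GLh.K) (use canon_props[of A] canon_props[of B] in \<open>auto simp: n_def\<close>)
  then show ?case
    by (rule transfer) (auto simp: canon_props forget_canon simp del: canon.simps
        intro: canon_props[THEN conjunct1])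
next
  case (L A)
  define n where "n = Suc (mh A)"
  have "HImp (HBox (Suc n) (HImp (HBox n (canon A)) (canon A))) (HBox n (canon A)) \<in> GLh"
    by (rule GLh.L) (use canon_props[of A] in \<open>auto simp: n_def\<close>)
  then show ?case
    by (rule transfer) (auto simp: forget_canon simp del: canon.simps
        intro: canon_props[THEN conjunct1])
next
  case (MP A B)
  then show ?case using GLh.MP by simp
next
  case (Nec A)
  then show ?case using GLh.Nec[of "canon A" "mh A"] canon_props[of A] by simp
qed

lemma hconj_Linf: "\<forall>B\<in>set Ds. in_Linf B \<Longrightarrow> in_Linf (hconj Ds)"
  by (induction Ds) auto

theorem theorem3p13:
  shows "(\<forall>(\<Gamma> :: 'a hfm set) A. (\<forall>B\<in>\<Gamma>. in_Linf B) \<longrightarrow> in_Linf A \<longrightarrow>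
            hderiv \<Gamma> A \<longrightarrow> mderiv (forget ` \<Gamma>) (forget A))
       \<and> (\<forall>(\<Gamma> :: 'a mfm set) A v w. (\<forall>B\<in>\<Gamma>. is_witness (v B) B) \<longrightarrow> is_witness w A \<longrightarrow>
            mderiv \<Gamma> A \<longrightarrow> hderiv ((\<lambda>B. inst (v B) B) ` \<Gamma>) (inst w A))"
proof (intro conjI allI impI)
  fix \<Gamma> :: "'a hfm set" and A
  assume "hderiv \<Gamma> A"
  then obtain Ds where Ds: "set Ds \<subseteq> \<Gamma>" "HImp (hconj Ds) A \<in> GLh"
    unfolding hderiv_def by blast
  have g: "MImp (mconj (map forget Ds)) (forget A) \<in> GL"
    using forget_GLh[OF Ds(2)] by (simp add: forget_hconj)
  have s: "set (map forget Ds) \<subseteq> forget ` \<Gamma>" using Ds(1) by auto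
  show "mderiv (forget ` \<Gamma>) (forget A)"
    unfolding mderiv_def using g s by blast
next
  fix \<Gamma> :: "'a mfm set" and A v w
  assume wit: "\<forall>B\<in>\<Gamma>. is_witness (v B) B" and wA: "is_witness w A" and md: "mderiv \<Gamma> A"
  obtain Ds where Ds: "set Ds \<subseteq> \<Gamma>" "MImp (mconj Ds) A \<in> GL"
    using md unfolding mderiv_def by blast
  define Es where "Es = map (\<lambda>B. inst (v B) B) Ds"
  have e1: "\<forall>B\<in>set Es. in_Linf B"
  proof
    fix B assume "B \<in> set Es"
    then obtain C where C: "C \<in> set Ds" "B = inst (v C) C" unfolding Es_def by auto
    then have "C \<in> \<Gamma>" using Ds(1) by blast
    then show "in_Linf B" using wit C(2) unfolding is_witness_def by blast
  qed
  have l: "in_Linf (HImp (hconj Es) (inst w A))"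
    using hconj_Linf[OF e1] wA by (simp add: is_witness_def)
  have f: "forget (canon (MImp (mconj Ds) A)) = forget (HImp (hconj Es) (inst w A))"
    by (simp add: forget_canon forget_hconj Es_def forget_inst o_def)
  have g: "HImp (hconj Es) (inst w A) \<in> GLh"
    using transfer[OF canon_GL[OF Ds(2)] l f] .
  have s: "set Es \<subseteq> (\<lambda>B. inst (v B) B) ` \<Gamma>" using Ds(1) unfolding Es_def by auto
  show "hderiv ((\<lambda>B. inst (v B) B) ` \<Gamma>) (inst w A)"
    unfolding hderiv_def using g s by blast
qed

end
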